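(* Let $H(\mathbb C)$ be the Fréchet space of entire functions with the topology of uniform convergence on compact sets, let $\phi$ be an entire function, and let $C_\phi:H(\mathbb C)\to H(\mathbb C)$, $C_\phi f=f\circ\phi$. Then $C_\phi$ is recurrent if and only if $\phi(z)=az+b$ for some $a,b\in\mathbb C$ with $|a|=1$.
   Context: A continuous linear operator $T$ on a Fréchet space $Y$ is recurrent if for every non-empty open $U\subset Y$ there is a positive integer $k$ with $U\cap T^{-k}(U)\neq\emptyset$. *)

theory Defs
  imports "HOL-Complex_Analysis.Complex_Analysis"
begin

definition entire_fns :: "(complex \<Rightarrow> complex) set" where
  "entire_fns = {f. f holomorphic_on UNIV}"

definition ucc_open :: "(complex \<Rightarrow> complex) set \<Rightarrow> bool" where
  "ucc_open U \<longleftrightarrow> U \<subseteq> entire_fns \<and>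
     (\<forall>f\<in>U. \<exists>K e. compact K \<and> e > 0 \<and>
        {g \<in> entire_fns. \<forall>z\<in>K. cmod (g z - f z) < e} \<subseteq> U)"

lemma ucc_openD:
  assumes "ucc_open U" "f \<in> U"
  obtains K e where "compact K" "e > 0" "{g \<in> entire_fns. \<forall>z\<in>K. cmod (g z - f z) < e} \<subseteq> U"
  using assms unfolding ucc_open_def by meson

lemma istopology_ucc_open: "istopology ucc_open"
  unfolding istopology_def
proof (intro conjI allI impI)
  fix S T assume S: "ucc_open S" and T: "ucc_open T"
  show "ucc_open (S \<inter> T)"
    unfolding ucc_open_def
  proof (intro conjI ballI)
    show "S \<inter> T \<subseteq> entire_fns" using S unfolding ucc_open_def by auto
  next
    fix f assume f: "f \<in> S \<inter> T"
    obtain K1 e1 where 1: "compact K1" "e1 > 0" "{g \<in> entire_fns. \<forall>z\<in>K1. cmod (g z - f z) < e1} \<subseteq> S"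
      using S f by (auto elim: ucc_openD)
    obtain K2 e2 where 2: "compact K2" "e2 > 0" "{g \<in> entire_fns. \<forall>z\<in>K2. cmod (g z - f z) < e2} \<subseteq> T"
      using T f by (auto elim: ucc_openD)
    show "\<exists>K e. compact K \<and> e > 0 \<and> {g \<in> entire_fns. \<forall>z\<in>K. cmod (g z - f z) < e} \<subseteq> S \<inter> T"
    proof (intro exI conjI)
      show "compact (K1 \<union> K2)" using 1 2 by (simp add: compact_Un)
      show "min e1 e2 > 0" using 1 2 by simp
      show "{g \<in> entire_fns. \<forall>z\<in>K1 \<union> K2. cmod (g z - f z) < min e1 e2} \<subseteq> S \<inter> T"
      proof
        fix g assume g: "g \<in> {g \<in> entire_fns. \<forall>z\<in>K1 \<union> K2. cmod (g z - f z) < min e1 e2}"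
        then have "g \<in> {g \<in> entire_fns. \<forall>z\<in>K1. cmod (g z - f z) < e1}"
             "g \<in> {g \<in> entire_fns. \<forall>z\<in>K2. cmod (g z - f z) < e2}" by auto
        then show "g \<in> S \<inter> T" using 1(3) 2(3) by (meson IntI subsetD)
      qed
    qed
  qed
next
  fix K assume K: "\<forall>S\<in>K. ucc_open S"
  show "ucc_open (\<Union>K)"
    unfolding ucc_open_def
  proof (intro conjI ballI)
    show "\<Union>K \<subseteq> entire_fns" using K unfolding ucc_open_def by auto
  next
    fix f assume "f \<in> \<Union>K"
    then obtain S where S: "S \<in> K" "f \<in> S" by auto
    then have "ucc_open S" using K by auto
    then obtain C e where "compact C" "e > 0" "{g \<in> entire_fns. \<forall>z\<in>C. cmod (g z - f z) < e} \<subseteq> S"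
      using S(2) by (rule ucc_openD)
    moreover have "S \<subseteq> \<Union>K" using S(1) by auto
    ultimately show "\<exists>C e. compact C \<and> e > 0 \<and> {g \<in> entire_fns. \<forall>z\<in>C. cmod (g z - f z) < e} \<subseteq> \<Union>K"
      by (meson order_trans)
  qed
qed

lemma openin_H_C: "openin (topology ucc_open) = ucc_open"
  using istopology_ucc_open by (rule topology_inverse')

definition H_C :: "(complex \<Rightarrow> complex) topology" where
  "H_C = topology ucc_open"

definition recurrent :: "'a topology \<Rightarrow> ('a \<Rightarrow> 'a) \<Rightarrow> bool" where
  "recurrent X T \<longleftrightarrow>
     (\<forall>U. openin X U \<and> U \<noteq> {} \<longrightarrow>
        (\<exists>k::nat. k > 0 \<and> U \<inter> {x \<in> topspace X. (T ^^ k) x \<in> U} \<noteq> {}))"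

definition comp_op :: "(complex \<Rightarrow> complex) \<Rightarrow> (complex \<Rightarrow> complex) \<Rightarrow> (complex \<Rightarrow> complex)" where
  "comp_op \<phi> f = f \<circ> \<phi>"

end

theory Submission
  imports Defs
begin

lemma comp_op_funpow: "(comp_op \<phi> ^^ k) f = f \<circ> (\<phi> ^^ k)"
  by (induction k) (auto simp: comp_op_def funpow_swap1)

lemma recurrent_H_C_iff:
  "recurrent H_C T \<longleftrightarrow> (\<forall>U. ucc_open U \<and> U \<noteq> {} \<longrightarrow> (\<exists>k>0. \<exists>f\<in>U. (T^^k) f \<in> U))"
proof -
  have o: "openin H_C = ucc_open" unfolding H_C_def by (rule openin_H_C)
  have "U \<subseteq> topspace H_C" if "ucc_open U" for U using openin_subset[of H_C U] o that by simp
  then have "ucc_open U \<Longrightarrow> U \<inter> {x \<in> topspace H_C. (T ^^ k) x \<in> U} \<noteq> {} \<longleftrightarrow> (\<exists>f\<in>U. (T^^k) f \<in> U)" for U k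
    by blast
  then show ?thesis unfolding recurrent_def o by meson
qed

lemma ucc_open_ball:
  assumes K: "compact K" and g: "continuous_on K g"
  shows "ucc_open {f \<in> entire_fns. \<forall>z\<in>K. cmod (f z - g z) < e}"
  unfolding ucc_open_def
proof (intro conjI ballI)
  show "{f \<in> entire_fns. \<forall>z\<in>K. cmod (f z - g z) < e} \<subseteq> entire_fns" by auto
next
  fix f assume f: "f \<in> {f \<in> entire_fns. \<forall>z\<in>K. cmod (f z - g z) < e}"
  show "\<exists>K' e'. compact K' \<and> e' > 0 \<and> {h \<in> entire_fns. \<forall>z\<in>K'. cmod (h z - f z) < e'} \<subseteq> {f \<in> entire_fns. \<forall>z\<in>K. cmod (f z - g z) < e}"
  proof (cases "K = {}")
    case True then show ?thesis by (intro exI[of _ K] exI[of _ 1]) (auto simp: K)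
  next
    case False
    have fc: "continuous_on K f" using f unfolding entire_fns_def
      by (auto intro: holomorphic_on_imp_continuous_on continuous_on_subset)
    have "continuous_on K (\<lambda>z. cmod (f z - g z))"
      by (intro continuous_intros fc g)
    then obtain z0 where z0: "z0 \<in> K" "\<And>y. y \<in> K \<Longrightarrow> cmod (f y - g y) \<le> cmod (f z0 - g z0)"
      using continuous_attains_sup[OF K False] by blast
    have m: "cmod (f z0 - g z0) < e" using f z0 by auto
    show ?thesis
    proof (intro exI[of _ K] exI[of _ "e - cmod (f z0 - g z0)"] conjI K)
      show "0 < e - cmod (f z0 - g z0)" using m by simp
      show "{h \<in> entire_fns. \<forall>z\<in>K. cmod (h z - f z) < e - cmod (f z0 - g z0)}
            \<subseteq> {f \<in> entire_fns. \<forall>z\<in>K. cmod (f z - g z) < e}"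
      proof safe
        fix h z assume h: "\<forall>z\<in>K. cmod (h z - f z) < e - cmod (f z0 - g z0)" and z: "z \<in> K"
        have "cmod (h z - g z) \<le> cmod (h z - f z) + cmod (f z - g z)"
          by (metis diff_add_cancel add_diff_eq norm_triangle_ineq)
        also have "\<dots> < e" using h z z0(2)[OF z] by force
        finally show "cmod (h z - g z) < e" .
      qed
    qed
  qed
qed


lemma norm_exp_quad:
  fixes z :: complex
  assumes "norm z \<le> 1 / 2"
  shows "norm (exp z - 1 - z) \<le> norm z ^ 2"
proof (cases "z = 0")
  case True then show ?thesis by simp
next
  case False
  have sums: "(\<lambda>k. z ^ (k + 2) /\<^sub>R fact (k + 2)) sums (exp z - (\<Sum>k<2. z ^ k /\<^sub>R fact k))"
    by (intro sums_split_initial_segment exp_converges)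
  have "summable (\<lambda>k. norm z ^ (k + 2) /\<^sub>R fact (k + 2))"
    using summable_norm_exp[of z]
    by (intro summable_norm summable_ignore_initial_segment)
       (auto simp: norm_power norm_divide divide_simps)
  also have "?this \<longleftrightarrow> summable (\<lambda>k. norm z ^ 2 * (norm z ^ k / fact (k +2)))"
    by (simp add: power_add mult_ac divide_simps power2_eq_square del: of_nat_Suc of_nat_add)
  also have "\<dots> \<longleftrightarrow> summable (\<lambda>k. norm z ^ k / fact (k + 2))"
    by (subst summable_cmult_iff) (use \<open>z \<noteq> 0\<close> in auto)
  finally have summable: "summable (\<lambda>k. norm z ^ k / fact (k + 2))" .
  have "exp z - 1 - z = (\<Sum>k. z ^ (k + 2) / fact (k + 2))"
    using sums by (simp add: sums_iff scaleR_conv_of_real divide_simps eval_nat_numeral)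
  also have "norm \<dots> \<le> (\<Sum>k. norm (z ^ (k + 2) / fact (k + 2)))"
    using summable_norm_exp[of z]
    by (intro summable_norm summable_ignore_initial_segment)
       (auto simp: norm_power norm_divide divide_simps)
  also have "\<dots> = (\<Sum>k. norm z ^ 2 * (norm z ^ k / fact (k + 2)))"
    by (simp add: power_add norm_power norm_divide mult_ac norm_mult power2_eq_square del: of_nat_Suc)
  also have "\<dots> = norm z ^ 2 * (\<Sum>k. norm z ^ k / fact (k + 2))"
    using summable by (rule suminf_mult)
  also have "\<dots> \<le> norm z ^ 2 * (1 / (1 - norm z) / 2)"
  proof (intro mult_left_mono, rule sums_le)
    show "(\<lambda>k. norm z ^ k / fact (k + 2)) sums (\<Sum>k. norm z ^ k / fact (k + 2))"
      using summable by blast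
    show "(\<lambda>k. norm z ^ k / 2) sums (1 / (1 - norm z) / 2)"
      using assms by (intro geometric_sums sums_divide) auto
  next
    fix k :: nat
    have "norm z ^ k / fact (k + 2) \<le> norm z ^ k / fact 2"
      by (intro divide_left_mono fact_mono) auto
    thus "norm z ^ k / fact (k + 2) \<le> norm z ^ k / 2"
      by simp
  qed (auto simp: divide_simps)
  also have "\<dots> \<le> norm z ^ 2"
  proof -
    have "1 / (1 - norm z) / 2 \<le> 1" using assms by (simp add: divide_simps)
    from mult_left_mono[OF this, of "norm z ^ 2"] show ?thesis by simp
  qed
  finally show ?thesis .
qed

definition qP :: "complex \<Rightarrow> complex \<Rightarrow> complex" where
  "qP P z = P / (2 * of_real pi * \<i>) * (exp (2 * of_real pi * \<i> * z / P) - 1)"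

lemma qP_periodic: "P \<noteq> 0 \<Longrightarrow> qP P (z + P) = qP P z"
proof -
  assume P: "P \<noteq> 0"
  have "2 * of_real pi * \<i> * (z + P) / P = 2 * of_real pi * \<i> * z / P + 2 * of_real pi * \<i>"
    using P by (simp add: field_simps)
  then show ?thesis unfolding qP_def by (simp add: exp_add)
qed

lemma qP_holo: "P \<noteq> 0 \<Longrightarrow> qP P holomorphic_on UNIV"
  unfolding qP_def by (intro holomorphic_intros) auto

lemma qP_close:
  assumes P: "P \<noteq> 0" and z: "norm z \<le> R" and PR: "4 * pi * R \<le> norm P"
  shows "norm (qP P z - z) \<le> 2 * pi * R^2 / norm P"
proof -
  define w where "w = 2 * of_real pi * \<i> * z / P"
  have nw: "norm w = 2 * pi * norm z / norm P"
    by (simp add: w_def norm_divide norm_mult)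
  have Pp: "norm P > 0" using P by simp
  have "norm w \<le> 2 * pi * R / norm P" unfolding nw using z Pp
    by (intro divide_right_mono) auto
  also have "\<dots> \<le> 1/2" using PR Pp by (simp add: divide_simps)
  finally have w2: "norm w \<le> 1/2" .
  have eq: "qP P z - z = P / (2 * of_real pi * \<i>) * (exp w - 1 - w)"
    unfolding qP_def w_def using P by (simp add: field_simps)
  have "norm (qP P z - z) = norm P / (2 * pi) * norm (exp w - 1 - w)"
    unfolding eq by (simp add: norm_mult norm_divide)
  also have "\<dots> \<le> norm P / (2 * pi) * norm w ^ 2"
    by (intro mult_left_mono norm_exp_quad w2) auto
  also have "\<dots> = 2 * pi * norm z ^ 2 / norm P"
    unfolding nw using Pp by (simp add: power2_eq_square field_simps)
  also have "\<dots> \<le> 2 * pi * R ^ 2 / norm P"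
    using z Pp by (intro divide_right_mono mult_left_mono power_mono) auto
  finally show ?thesis .
qed

lemma rot_return:
  fixes a :: complex
  assumes a: "norm a = 1" and eta: "\<eta> > 0"
  shows "\<exists>k>0. norm (a ^ k - 1) < \<eta>"
proof -
  have "bounded (range (\<lambda>n. a ^ n))"
    using a by (auto simp: bounded_iff norm_power intro!: exI[of _ 1])
  then obtain l r where r: "strict_mono (r::nat\<Rightarrow>nat)" and lim: "((\<lambda>n. a ^ n) \<circ> r) \<longlonglongrightarrow> l"
    using bounded_imp_convergent_subsequence by blast
  from lim have "Cauchy ((\<lambda>n. a ^ n) \<circ> r)" by (rule LIMSEQ_imp_Cauchy)
  then obtain M where M: "\<And>m n. m \<ge> M \<Longrightarrow> n \<ge> M \<Longrightarrow> dist (((\<lambda>n. a ^ n) \<circ> r) m) (((\<lambda>n. a ^ n) \<circ> r) n) < \<eta>"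
    using eta unfolding Cauchy_def by meson
  have lt: "r M < r (Suc M)" using r by (simp add: strict_mono_def)
  define k where "k = r (Suc M) - r M"
  have k: "k > 0" using lt by (simp add: k_def)
  have "a ^ r (Suc M) = a ^ r M * a ^ k" using lt by (simp add: k_def flip: power_add)
  then have "a ^ r (Suc M) - a ^ r M = a ^ r M * (a ^ k - 1)" by (simp add: algebra_simps)
  then have "norm (a ^ k - 1) = norm (a ^ r (Suc M) - a ^ r M)" using a by (simp add: norm_mult norm_power)
  also have "\<dots> < \<eta>" using M[of "Suc M" M] by (simp add: dist_norm)
  finally show ?thesis using k by blast
qed

lemma unif_cont_entire:
  assumes g: "g holomorphic_on UNIV" and e: "e > 0"
  shows "\<exists>\<delta>>0. \<delta> \<le> 1 \<and> (\<forall>z w. norm z \<le> R \<longrightarrow> norm (w - z) < \<delta> \<longrightarrow> norm (g w - g z) < e)"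
proof -
  have "uniformly_continuous_on (cball 0 (R+1)) g"
    using g by (intro compact_uniformly_continuous) (auto intro: holomorphic_on_imp_continuous_on continuous_on_subset)
  then obtain d where d: "d > 0" "\<And>x x'. x \<in> cball 0 (R+1) \<Longrightarrow> x' \<in> cball 0 (R+1) \<Longrightarrow> dist x' x < d \<Longrightarrow> dist (g x') (g x) < e"
    using e unfolding uniformly_continuous_on_def by metis
  show ?thesis
  proof (intro exI[of _ "min d 1"] conjI allI impI)
    fix z w :: complex assume z: "norm z \<le> R" and w: "norm (w - z) < min d 1"
    have "norm w \<le> norm z + norm (w - z)" by (metis add.commute diff_add_cancel norm_triangle_ineq)
    then have "w \<in> cball 0 (R+1)" "z \<in> cball 0 (R+1)" using z w by auto
    then show "norm (g w - g z) < e" using d(2)[of z w] w by (simp add: dist_norm)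
  qed (use d in auto)
qed


lemma iter_affine_fix:
  assumes "a * c + b = (c::complex)"
  shows "((\<lambda>z. a*z+b)^^k) z = c + a^k * (z - c)"
proof (induction k)
  case 0 then show ?case by simp
next
  case (Suc k)
  have "((\<lambda>z. a*z+b)^^Suc k) z = a*(((\<lambda>z. a*z+b)^^k) z) + b" by simp
  also have "\<dots> = a*(c + a^k * (z - c)) + b" using Suc by simp
  also have "\<dots> = (a*c+b) + a^Suc k*(z-c)" by (simp add: algebra_simps)
  also have "\<dots> = c + a^Suc k*(z-c)" using assms by simp
  finally show ?case .
qed

lemma iter_transl: "((\<lambda>z. 1*z+b)^^k) z = z + of_nat k * (b::complex)"
  by (induction k) (auto simp: algebra_simps)

lemma funpow_holo: "\<phi> holomorphic_on UNIV \<Longrightarrow> (\<phi>^^k) holomorphic_on UNIV"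
proof (induction k)
  case 0 then show ?case by (simp add: id_def)
next
  case (Suc k)
  then have "(\<phi> \<circ> (\<phi>^^k)) holomorphic_on UNIV"
    by (intro holomorphic_on_compose) (auto intro: holomorphic_on_subset)
  then show ?case by (simp only: funpow.simps(2))
qed

lemma suff:
  assumes phi: "\<phi> holomorphic_on UNIV"
    and H: "\<And>g K e. g holomorphic_on UNIV \<Longrightarrow> compact K \<Longrightarrow> e > 0 \<Longrightarrow>
             \<exists>k>0. \<exists>f. f holomorphic_on UNIV \<and> (\<forall>z\<in>K. cmod (f z - g z) < e) \<and> (\<forall>z\<in>K. cmod (f ((\<phi>^^k) z) - g z) < e)"
  shows "recurrent H_C (comp_op \<phi>)"
  unfolding recurrent_H_C_iff
proof (intro allI impI)
  fix U assume U: "ucc_open U \<and> U \<noteq> {}"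
  then obtain g where gU: "g \<in> U" by blast
  then have g: "g holomorphic_on UNIV" using U unfolding ucc_open_def entire_fns_def by auto
  obtain K e where K: "compact K" "e > 0" "{h \<in> entire_fns. \<forall>z\<in>K. cmod (h z - g z) < e} \<subseteq> U"
    using ucc_openD[of U g] U gU by blast
  obtain k f where k: "k > 0" "f holomorphic_on UNIV" "\<forall>z\<in>K. cmod (f z - g z) < e"
      "\<forall>z\<in>K. cmod (f ((\<phi>^^k) z) - g z) < e"
    using H[OF g K(1,2)] by blast
  have "f \<in> U" using K(3) k unfolding entire_fns_def by auto
  moreover have "(comp_op \<phi> ^^ k) f \<in> U"
  proof -
    have "(f \<circ> (\<phi>^^k)) holomorphic_on UNIV"
      using funpow_holo[OF phi, of k] k(2)
      by (intro holomorphic_on_compose) (auto intro: holomorphic_on_subset)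
    then show ?thesis unfolding comp_op_funpow using K(3) k(4) unfolding entire_fns_def by auto
  qed
  ultimately show "\<exists>k>0. \<exists>f\<in>U. (comp_op \<phi> ^^ k) f \<in> U" using k(1) by blast
qed

lemma sufficiency:
  assumes a: "cmod a = 1"
  shows "recurrent H_C (comp_op (\<lambda>z. a*z+b))"
proof (rule suff)
  show "(\<lambda>z. a*z+b) holomorphic_on UNIV" by (intro holomorphic_intros)
next
  fix g :: "complex \<Rightarrow> complex" and K :: "complex set" and e
  assume g: "g holomorphic_on UNIV" and K: "compact K" and e: "(e::real) > 0"
  obtain R0 where R0: "\<And>z. z \<in> K \<Longrightarrow> norm z \<le> R0"
    using compact_imp_bounded[OF K] unfolding bounded_iff by blast
  define R where "R = max R0 1"
  have R: "\<And>z. z \<in> K \<Longrightarrow> norm z \<le> R" "R \<ge> 1" using R0 unfolding R_def by force+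
  obtain \<delta> where d: "\<delta> > 0" "\<delta> \<le> 1" "\<And>z w. norm z \<le> R \<Longrightarrow> norm (w - z) < \<delta> \<Longrightarrow> norm (g w - g z) < e"
    using unif_cont_entire[OF g e, of R] by blast
  show "\<exists>k>0. \<exists>f. f holomorphic_on UNIV \<and> (\<forall>z\<in>K. cmod (f z - g z) < e) \<and>
          (\<forall>z\<in>K. cmod (f (((\<lambda>z. a*z+b)^^k) z) - g z) < e)"
  proof (cases "a = 1")
    case False
    define c where "c = b / (1 - a)"
    have fx: "a * c + b = c" using False unfolding c_def by (simp add: field_simps)
    have pos: "\<delta> / (R + norm c + 1) > 0" using d R(2) by (simp add: add_pos_nonneg)
    obtain k where k: "k > 0" "norm (a^k - 1) < \<delta> / (R + norm c + 1)"
      using rot_return[OF a pos] by blast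
    have "\<forall>z\<in>K. cmod (g (((\<lambda>z. a*z+b)^^k) z) - g z) < e"
    proof
      fix z assume z: "z \<in> K"
      have "((\<lambda>z. a*z+b)^^k) z - z = (a^k - 1) * (z - c)"
        unfolding iter_affine_fix[OF fx] by (simp add: algebra_simps)
      then have "norm (((\<lambda>z. a*z+b)^^k) z - z) = norm (a^k - 1) * norm (z - c)"
        by (simp add: norm_mult)
      also have "\<dots> \<le> norm (a^k - 1) * (R + norm c)"
        using R(1)[OF z] by (intro mult_left_mono) (auto intro: order_trans[OF norm_triangle_ineq4])
      also have "\<dots> < \<delta>"
      proof -
        have "norm (a^k - 1) * (R + norm c) \<le> norm (a^k - 1) * (R + norm c + 1)" by (intro mult_left_mono) auto
        also have "\<dots> < \<delta>" using k(2) R(2) by (simp add: field_simps add_pos_nonneg)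
        finally show ?thesis .
      qed
      finally show "cmod (g (((\<lambda>z. a*z+b)^^k) z) - g z) < e" using d(3)[OF R(1)[OF z]] by blast
    qed
    then show ?thesis using k(1) g e by (intro exI[of _ k] conjI exI[of _ g]) auto
  next
    case True
    show ?thesis
    proof (cases "b = 0")
      case True
      have "((\<lambda>z. a*z+b)^^1) = id" using \<open>a = 1\<close> True by (simp add: fun_eq_iff)
      then show ?thesis using g e by (intro exI[of _ 1] conjI exI[of _ g]) auto
    next
      case False
      define k :: nat where "k = nat \<lceil>(4 * pi * R + 2 * pi * R^2 / \<delta>) / norm b\<rceil> + 1"
      define P where "P = of_nat k * b"
      have nb: "norm b > 0" using False by simp
      have "real k > (4 * pi * R + 2 * pi * R^2 / \<delta>) / norm b"
        unfolding k_def by linarith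
      then have kb: "real k * norm b > 4 * pi * R + 2 * pi * R^2 / \<delta>"
        using nb by (simp add: field_simps)
      have nP: "norm P = real k * norm b" unfolding P_def by (simp add: norm_mult)
      have kpos: "k > 0" unfolding k_def by simp
      have P0: "P \<noteq> 0" using kpos False by (simp add: P_def)
      have PR: "4 * pi * R \<le> norm P"
        using kb nP d(1) R(2) by (smt (verit) divide_nonneg_pos mult_nonneg_nonneg pi_ge_zero zero_le_power2)
      have PR2: "2 * pi * R^2 / norm P < \<delta>"
      proof -
        have "2 * pi * R^2 / \<delta> < norm P"
          using kb nP R(2) by (smt (verit) mult_nonneg_nonneg pi_ge_zero)
        then show ?thesis using d(1) P0 by (simp add: field_simps)
      qed
      define f where "f = g \<circ> qP P"
      have fh: "f holomorphic_on UNIV" unfolding f_def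
        using qP_holo[OF P0] g by (intro holomorphic_on_compose) (auto intro: holomorphic_on_subset)
      have close: "cmod (f z - g z) < e" if z: "z \<in> K" for z
      proof -
        have "norm (qP P z - z) < \<delta>" using qP_close[OF P0 R(1)[OF z] PR] PR2 by linarith
        then show ?thesis unfolding f_def using d(3)[OF R(1)[OF z]] by simp
      qed
      have per: "f (((\<lambda>z. a*z+b)^^k) z) = f z" for z
      proof -
        have "((\<lambda>z. a*z+b)^^k) z = z + P" using iter_transl[where b=b and k=k and z=z] \<open>a = 1\<close> by (simp add: P_def)
        then show ?thesis unfolding f_def using qP_periodic[OF P0] by simp
      qed
      have "k > 0" unfolding k_def by simp
      then show ?thesis using fh close per by (intro exI[of _ k] conjI exI[of _ f]) auto
    qed
  qed
qed


lemma sum_low_deg: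
  assumes "\<And>i. 2 \<le> i \<Longrightarrow> i \<le> n \<Longrightarrow> c i = 0"
  shows "(\<Sum>i\<le>n. c i * (z::complex)^i) = c 0 + (if n = 0 then 0 else c 1) * z"
  using assms
proof (induction n)
  case 0 then show ?case by simp
next
  case (Suc n)
  have "(\<Sum>i\<le>Suc n. c i * z^i) = (\<Sum>i\<le>n. c i * z^i) + c (Suc n) * z ^ Suc n" by simp
  also have "(\<Sum>i\<le>n. c i * z^i) = c 0 + (if n = 0 then 0 else c 1) * z" using Suc by simp
  finally show ?case using Suc.prems[of "Suc n"] by (cases n) auto
qed

lemma inj_poly_affine:
  fixes c :: "nat \<Rightarrow> complex"
  assumes phi: "\<And>z. \<phi> z = (\<Sum>i\<le>n. c i * z^i)" and inj: "inj \<phi>"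
  shows "\<exists>a b. \<forall>z. \<phi> z = a * z + b"
proof -
  have hol: "\<phi> holomorphic_on UNIV"
  proof -
    have "\<phi> = (\<lambda>z. \<Sum>i\<le>n. c i * z^i)" using phi by auto
    then show ?thesis by (simp add: holomorphic_intros)
  qed
  have z: "c j = 0" if j: "2 \<le> j" "j \<le> n" for j
  proof (rule ccontr)
    assume cj: "c j \<noteq> 0"
    obtain m where m: "n = Suc m" using j by (cases n) auto
    define d where "d i = c (Suc i) * of_nat (Suc i)" for i
    have der: "deriv \<phi> z = (\<Sum>i\<le>m. d i * z^i)" for z
    proof -
      have "\<phi> = (\<lambda>z. \<Sum>i\<le>n. c i * z^i)" using phi by auto
      moreover have "((\<lambda>z. \<Sum>i\<le>n. c i * z^i) has_field_derivative (\<Sum>i\<le>n. c i * (of_nat i * z^(i - 1)))) (at z)"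
        by (auto intro!: derivative_eq_intros simp: mult_ac)
      ultimately have "deriv \<phi> z = (\<Sum>i\<le>n. c i * (of_nat i * z^(i - 1)))"
        using DERIV_imp_deriv by blast
      also have "\<dots> = (\<Sum>i\<le>m. d i * z^i)"
        unfolding m sum.atMost_Suc_shift by (simp add: d_def mult_ac)
      finally show ?thesis .
    qed
    have "d 0 = 0 \<or> (\<exists>i\<in>{1..m}. d i \<noteq> 0)"
    proof (intro disjI2 bexI[of _ "j - 1"])
      show "j - 1 \<in> {1..m}" unfolding atLeastAtMost_iff using j m by arith
      have "Suc (j - 1) = j" using j by simp
      then show "d (j - 1) \<noteq> 0" using cj by (simp add: d_def)
    qed
    then obtain z0 where "(\<Sum>i\<le>m. d i * z0^i) = 0"
      using fundamental_theorem_of_algebra by blast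
    then have "deriv \<phi> z0 = 0" using der by simp
    moreover have "deriv \<phi> z0 \<noteq> 0"
      using holomorphic_injective_imp_regular[OF hol open_UNIV] inj by simp
    ultimately show False by simp
  qed
  have "\<phi> w = (if n = 0 then 0 else c 1) * w + c 0" for w
  proof -
    have "\<phi> w = c 0 + (if n = 0 then 0 else c 1) * w"
      unfolding phi by (rule sum_low_deg) (rule z)
    then show ?thesis by (simp only: add.commute)
  qed
  then show ?thesis by blast
qed

lemma inj_entire_affine:
  assumes holf: "\<phi> holomorphic_on UNIV" and inj: "inj \<phi>"
  shows "\<exists>a b. \<forall>z. \<phi> z = a * z + b"
proof -
  have hol: "(\<phi> \<circ> inverse) holomorphic_on (ball 0 1 - {0})"
    by (intro holomorphic_on_compose holomorphic_intros holomorphic_on_subset[OF holf]) auto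
  consider (A) l where "((\<phi> \<circ> inverse) \<longlongrightarrow> l) (at 0)"
    | (B) l where "((inverse \<circ> (\<phi> \<circ> inverse)) \<longlongrightarrow> l) (at 0)"
    | (C) "\<And>l. \<not> ((\<phi> \<circ> inverse) \<longlongrightarrow> l) (at 0)" "\<And>l. \<not> ((inverse \<circ> (\<phi> \<circ> inverse)) \<longlongrightarrow> l) (at 0)"
    by blast
  then show ?thesis
  proof cases
    case (A l)
    then have "(\<phi> \<longlongrightarrow> l) at_infinity" by (simp add: lim_at_infinity_0)
    then have "\<phi> 0 = \<phi> 1" using Liouville_weak[OF holf] by metis
    then show ?thesis using inj by (auto dest: injD)
  next
    case (B l)
    then have "((inverse \<circ> \<phi>) \<longlongrightarrow> l) at_infinity" by (simp add: lim_at_infinity_0 o_assoc)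
    then obtain c n where "\<And>z. \<phi> z = (\<Sum>i\<le>n. c i * z^i)"
      using pole_at_infinity[OF holf] by blast
    then show ?thesis using inj_poly_affine inj by blast
  next
    case C
    obtain a where a: "\<And>w. w \<noteq> a \<Longrightarrow> infinite {x. x \<in> ball 0 1 - {0} \<and> (\<phi> \<circ> inverse) x = w}"
      using great_Picard_infinite[OF open_ball _ hol C(1) C(2)] by auto
    define S where "S = {x. x \<in> ball 0 1 - {0} \<and> (\<phi> \<circ> inverse) x = a + 1}"
    have inf: "infinite S" unfolding S_def by (rule a) simp
    then obtain x1 where x1: "x1 \<in> S" using infinite_imp_nonempty by blast
    have "infinite (S - {x1})" using inf by simp
    then obtain x2 where x2: "x2 \<in> S - {x1}" using infinite_imp_nonempty by blast
    have "\<phi> (inverse x1) = \<phi> (inverse x2)" using x1 x2 unfolding S_def by simp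
    then have "inverse x1 = inverse x2" using inj by (auto dest: injD)
    then have "x1 = x2" by simp
    then show ?thesis using x2 by simp
  qed
qed

lemma recurrent_inj:
  assumes rec: "recurrent H_C (comp_op \<phi>)"
  shows "inj \<phi>"
proof (rule injI, rule ccontr)
  fix z1 z2 assume eq: "\<phi> z1 = \<phi> z2" and ne: "z1 \<noteq> z2"
  define g where "g z = (z - z1) / (z2 - z1)" for z
  have gh: "g holomorphic_on UNIV" unfolding g_def using ne by (intro holomorphic_intros) auto
  define U where "U = {f \<in> entire_fns. \<forall>z\<in>{z1,z2}. cmod (f z - g z) < 1/2}"
  have "ucc_open U" unfolding U_def
    by (intro ucc_open_ball) (auto intro: holomorphic_on_imp_continuous_on continuous_on_subset gh)
  moreover have "g \<in> U" unfolding U_def entire_fns_def using gh by auto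
  ultimately obtain k f where k: "k > 0" "f \<in> U" "(comp_op \<phi> ^^ k) f \<in> U"
    using rec unfolding recurrent_H_C_iff by blast
  obtain m where m: "k = Suc m" using k(1) by (cases k) auto
  have "(\<phi>^^k) z1 = (\<phi>^^k) z2" unfolding m funpow_Suc_right using eq by simp
  then obtain w where w1: "(\<phi>^^k) z1 = w" and w2: "(\<phi>^^k) z2 = w" by blast
  have g1: "g z1 = 0" and g2: "g z2 = 1" unfolding g_def using ne by auto
  have "cmod (f w - 0) < 1/2" "cmod (f w - 1) < 1/2"
    using k(3) w1 w2 g1 g2 unfolding U_def comp_op_funpow by auto
  moreover have "1 \<le> cmod (f w - 0) + cmod (f w - 1)"
  proof -
    have "(1::real) = cmod ((f w - 0) - (f w - 1))" by simp
    also have "\<dots> \<le> cmod (f w - 0) + cmod (f w - 1)" by (rule norm_triangle_ineq4)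
    finally show ?thesis .
  qed
  ultimately show False by simp
qed


lemma not_recurrent_affine:
  assumes a: "cmod a \<noteq> 1" and rec: "recurrent H_C (comp_op (\<lambda>z. a*z+b))"
  shows False
proof -
  have a1: "a \<noteq> 1" using a by auto
  define c where "c = b / (1 - a)"
  have fx: "a * c + b = c" using a1 unfolding c_def by (simp add: field_simps)
  define \<epsilon> where "\<epsilon> = (if cmod a < 1 then (1 - cmod a) / 2 else (1 - 1 / cmod a) / 2)"
  have ep: "\<epsilon> > 0"
  proof (cases "cmod a < 1")
    case True then show ?thesis by (simp add: \<epsilon>_def)
  next
    case False
    then have "cmod a > 1" using a by simp
    then have "1 / cmod a < 1" by (auto simp: divide_less_eq_1)
    then show ?thesis using False by (simp add: \<epsilon>_def)
  qed
  define U where "U = {f \<in> entire_fns. \<forall>z\<in>cball c 1. cmod (f z - (z - c)) < \<epsilon>}"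
  have "ucc_open U" unfolding U_def
    by (intro ucc_open_ball) (auto intro!: continuous_intros)
  moreover have "(\<lambda>z. z - c) \<in> U" unfolding U_def entire_fns_def using ep
    by (auto intro!: holomorphic_intros)
  ultimately obtain k f where k: "k > 0" "f \<in> U" "(comp_op (\<lambda>z. a*z+b) ^^ k) f \<in> U"
    using rec unfolding recurrent_H_C_iff by blast
  have it: "((\<lambda>z. a*z+b)^^k) z = c + a^k * (z - c)" for z by (rule iter_affine_fix[OF fx])
  have fU: "cmod (f z - (z - c)) < \<epsilon>" if "z \<in> cball c 1" for z using k(2) that unfolding U_def by auto
  have fkU: "cmod (f (c + a^k * (z - c)) - (z - c)) < \<epsilon>" if "z \<in> cball c 1" for z
    using k(3) that unfolding U_def comp_op_funpow it by auto
  show False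
  proof (cases "cmod a < 1")
    case True
    have ak: "cmod (a^k) \<le> cmod a" using True k(1)
      by (simp add: norm_power power_le_imp_le_exp) (metis One_nat_def Suc_leI norm_ge_zero power_decreasing power_one_right less_imp_le)
    have in1: "c + a^k \<in> cball c 1" using ak True by (simp add: dist_norm)
    have "cmod (f (c + a^k) - a^k) < \<epsilon>" using fU[OF in1] by simp
    moreover have "cmod (f (c + a^k) - 1) < \<epsilon>" using fkU[of "c+1"] by (simp add: dist_norm)
    ultimately have "cmod (1 - a^k) < 2 * \<epsilon>"
      using norm_triangle_ineq4[of "f (c + a^k) - a^k" "f (c + a^k) - 1"] by simp
    moreover have "1 - cmod (a^k) \<le> cmod (1 - a^k)"
      using norm_triangle_ineq2[of 1 "a^k"] by simp
    ultimately show False using ak True unfolding \<epsilon>_def by simp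
  next
    case False
    then have ag: "cmod a > 1" using a by simp
    define v where "v = inverse (a^k)"
    have vk: "cmod v \<le> 1 / cmod a"
    proof -
      have "cmod a \<le> cmod a ^ k" using ag k(1)
        by (metis One_nat_def Suc_leI less_imp_le power_increasing power_one_right)
      then have "inverse (cmod a ^ k) \<le> inverse (cmod a)"
        using ag by (intro le_imp_inverse_le) auto
      then show ?thesis unfolding v_def by (simp add: norm_inverse norm_power divide_inverse)
    qed
    have v1: "cmod v \<le> 1" using vk ag by (smt (verit) divide_le_eq_1)
    have in1: "c + v \<in> cball c 1" using v1 by (simp add: dist_norm)
    have ak0: "a^k \<noteq> 0" using ag by auto
    have "cmod (f (c + 1) - v) < \<epsilon>" using fkU[OF in1] ak0 by (simp add: v_def)
    moreover have "cmod (f (c + 1) - 1) < \<epsilon>" using fU[of "c+1"] by (simp add: dist_norm)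
    ultimately have "cmod (1 - v) < 2 * \<epsilon>"
      using norm_triangle_ineq4[of "f (c + 1) - v" "f (c + 1) - 1"] by simp
    moreover have "1 - cmod v \<le> cmod (1 - v)"
      using norm_triangle_ineq2[of 1 v] by simp
    ultimately show False using vk False unfolding \<epsilon>_def by simp
  qed
qed

theorem theorem6p4:
  fixes \<phi> :: "complex \<Rightarrow> complex"
  assumes "\<phi> holomorphic_on UNIV"
  shows "recurrent H_C (comp_op \<phi>) \<longleftrightarrow> (\<exists>a b. cmod a = 1 \<and> (\<forall>z. \<phi> z = a * z + b))"
proof
  assume rec: "recurrent H_C (comp_op \<phi>)"
  obtain a b where ab: "\<forall>z. \<phi> z = a * z + b"
    using inj_entire_affine[OF assms recurrent_inj[OF rec]] by blast
  then have phi: "\<phi> = (\<lambda>z. a*z+b)" by auto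
  have "cmod a = 1" using not_recurrent_affine[of a b] rec unfolding phi by blast
  then show "\<exists>a b. cmod a = 1 \<and> (\<forall>z. \<phi> z = a * z + b)" using ab by blast
next
  assume "\<exists>a b. cmod a = 1 \<and> (\<forall>z. \<phi> z = a * z + b)"
  then obtain a b where a: "cmod a = 1" and ab: "\<forall>z. \<phi> z = a * z + b" by blast
  then have phi: "\<phi> = (\<lambda>z. a*z+b)" by auto
  show "recurrent H_C (comp_op \<phi>)" unfolding phi by (rule sufficiency[OF a])
qed

end
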